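(* Let $\mathcal{X}$ and $\mathcal{Y}$ be finite sets with $2 \le |\mathcal{X}|,|\mathcal{Y}| < \infty$, and let $X,Y$ have joint pmf $P_{X,Y}$ with $P_X(x)>0$ for all $x\in\mathcal{X}$ and $P_Y(y)>0$ for all $y\in\mathcal{Y}$. Let $f:(0,\infty)\to\mathbb{R}$ be convex, strictly convex and thrice differentiable at $1$, with $f(1)=0$ and $f''(1)>0$, such that for every $t\in(0,\infty)$, $$\bigl(f(t)-f'(1)(t-1)\bigr)\left(1-\frac{f'''(1)}{3f''(1)}(t-1)\right)\ge \frac{f''(1)}{2}(t-1)^2 .$$ Suppose further that the function $g:(0,\infty)\to\mathbb{R}$, $g(x)=\frac{f(x)-f(0)}{x}$ with $f(0)=\lim_{t\to0^+}f(t)$, is concave. Then $$\eta_{\chi^2}(P_X,P_{Y|X})\le\eta_f(P_X,P_{Y|X})\le \frac{f'(1)+f(0)}{f''(1)\min_{x\in\mathcal{X}}P_X(x)}\,\eta_{\chi^2}(P_X,P_{Y|X}).$$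
   Context: Let $W$ be the column stochastic matrix of the channel $P_{Y|X}$ (its $x$th column is $P_{Y|X=x}$), mapping a pmf $R_X$ on $\mathcal{X}$ to $WR_X$. Strict convexity at $1$ means $\lambda f(x)+(1-\lambda)f(y)>f(1)$ whenever $\lambda\in(0,1)$, $x,y>0$, $\lambda x+(1-\lambda)y=1$. The $f$-divergence is $D_f(R_X\|P_X)=\sum_x P_X(x)f(R_X(x)/P_X(x))$ with conventions $f(0)=\lim_{t\to0^+}f(t)$, $0f(0/0)=0$, $0f(r/0)=r\lim_{p\to0^+}pf(1/p)$ for $r>0$. The $\chi^2$-divergence is $\chi^2(R_X\|P_X)=\sum_x (R_X(x)-P_X(x))^2/P_X(x)$ (the case $f(t)=t^2-1$). The contraction coefficient is $\eta_f(P_X,P_{Y|X})=\sup\{D_f(WR_X\|WP_X)/D_f(R_X\|P_X): R_X \text{ a pmf on } \mathcal{X},\ 0<D_f(R_X\|P_X)<\infty\}$, and $\eta_{\chi^2}$ is this coefficient for the $\chi^2$-divergence. *)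

theory Defs
  imports "HOL-Analysis.Analysis"
begin

definition is_pmf :: "('a::finite \<Rightarrow> real) \<Rightarrow> bool" where
  "is_pmf R \<longleftrightarrow> (\<forall>x. 0 \<le> R x) \<and> (\<Sum>x\<in>UNIV. R x) = 1"

definition fzero :: "(real \<Rightarrow> real) \<Rightarrow> real" where
  "fzero f = Lim (at_right 0) f"

definition fext :: "(real \<Rightarrow> real) \<Rightarrow> real \<Rightarrow> real" where
  "fext f t = (if t = 0 then fzero f else f t)"

text \<open>f-divergence D_f(R||Q) = sum_x Q(x) f(R(x)/Q(x)); the reference measures used
  below always have full support, so the conventions for Q(x)=0 never arise
  (they are encoded as 0 when R x = 0; the case R x > 0 = Q x does not occur).\<close>
definition fdiv :: "(real \<Rightarrow> real) \<Rightarrow> ('a::finite \<Rightarrow> real) \<Rightarrow> ('a \<Rightarrow> real) \<Rightarrow> real" where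
  "fdiv f R Q = (\<Sum>x\<in>UNIV. if Q x = 0 then 0 else Q x * fext f (R x / Q x))"

definition chi2div :: "('a::finite \<Rightarrow> real) \<Rightarrow> ('a \<Rightarrow> real) \<Rightarrow> real" where
  "chi2div R Q = (\<Sum>x\<in>UNIV. (R x - Q x)^2 / Q x)"

text \<open>Marginal of X, and column-stochastic channel matrix W y x = P_{Y|X}(y|x).\<close>
definition marg_X :: "('x::finite \<Rightarrow> 'y::finite \<Rightarrow> real) \<Rightarrow> 'x \<Rightarrow> real" where
  "marg_X P x = (\<Sum>y\<in>UNIV. P x y)"

definition marg_Y :: "('x::finite \<Rightarrow> 'y::finite \<Rightarrow> real) \<Rightarrow> 'y \<Rightarrow> real" where
  "marg_Y P y = (\<Sum>x\<in>UNIV. P x y)"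

definition channel :: "('x::finite \<Rightarrow> 'y::finite \<Rightarrow> real) \<Rightarrow> 'y \<Rightarrow> 'x \<Rightarrow> real" where
  "channel P y x = P x y / marg_X P x"

definition chmap :: "('y \<Rightarrow> 'x::finite \<Rightarrow> real) \<Rightarrow> ('x \<Rightarrow> real) \<Rightarrow> 'y \<Rightarrow> real" where
  "chmap W R = (\<lambda>y. \<Sum>x\<in>UNIV. W y x * R x)"

text \<open>Contraction coefficient for a divergence D (extended-real supremum; all
  divergences here are finite reals, so 0 < D < infinity reduces to 0 < D).\<close>
definition contraction ::
  "(('x::finite \<Rightarrow> real) \<Rightarrow> ('x \<Rightarrow> real) \<Rightarrow> real) \<Rightarrow> (('y \<Rightarrow> real) \<Rightarrow> ('y \<Rightarrow> real) \<Rightarrow> real)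
    \<Rightarrow> ('x \<Rightarrow> real) \<Rightarrow> ('y \<Rightarrow> 'x \<Rightarrow> real) \<Rightarrow> ereal" where
  "contraction DX DY PX W =
     (SUP R\<in>{R. is_pmf R \<and> 0 < DX R PX}. ereal (DY (chmap W R) (chmap W PX) / DX R PX))"

definition eta_f :: "(real \<Rightarrow> real) \<Rightarrow> ('x::finite \<Rightarrow> real) \<Rightarrow> ('y::finite \<Rightarrow> 'x \<Rightarrow> real) \<Rightarrow> ereal" where
  "eta_f f PX W = contraction (fdiv f) (fdiv f) PX W"

definition eta_chi2 :: "('x::finite \<Rightarrow> real) \<Rightarrow> ('y::finite \<Rightarrow> 'x \<Rightarrow> real) \<Rightarrow> ereal" where
  "eta_chi2 PX W = contraction chi2div chi2div PX W"

definition strictly_convex_at_1 :: "(real \<Rightarrow> real) \<Rightarrow> bool" where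
  "strictly_convex_at_1 f \<longleftrightarrow>
     (\<forall>l x y. 0 < l \<and> l < 1 \<and> 0 < x \<and> 0 < y \<and> l * x + (1 - l) * y = 1 \<longrightarrow>
        l * f x + (1 - l) * f y > f 1)"

end

theory Submission
  imports Defs
begin


lemma phi_lim:
  fixes f d1 d2 :: "real \<Rightarrow> real" and e :: real
  assumes "e > 0"
    and D: "\<forall>t\<in>ball 1 e. (f has_real_derivative d1 t) (at t) \<and> (d1 has_real_derivative d2 t) (at t)"
    and f1: "f 1 = 0"
  shows "((\<lambda>s. (f (1+s) - d1 1 * s) / s^2) \<longlongrightarrow> d2 1 / 2) (at 0)"
proof (rule lhopital[where f' = "\<lambda>s. d1 (1+s) - d1 1" and g' = "\<lambda>s. 2 * s"])
  have ev: "eventually (\<lambda>s. s \<in> ball 0 e) (at (0::real))"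
    using assms(1) by (intro eventually_at_in_open') auto
  have c1: "isCont f 1" using D assms(1) by (auto intro: DERIV_isCont)
  have "((\<lambda>s. f (1+s)) \<longlongrightarrow> f 1) (at 0)"
    using c1 by (simp add: isCont_def LIM_offset_zero)
  then have "((\<lambda>s. f (1+s) - d1 1 * s) \<longlongrightarrow> f 1 - d1 1 * 0) (at 0)"
    by (intro tendsto_intros)
  then show "((\<lambda>s. f (1+s) - d1 1 * s) \<longlongrightarrow> 0) (at 0)" using f1 by simp
  show "((\<lambda>s::real. s^2) \<longlongrightarrow> 0) (at 0)"
    using tendsto_power[OF tendsto_ident_at[of "0::real" UNIV], of 2] by simp
  show "eventually (\<lambda>s::real. s^2 \<noteq> 0) (at 0)"
    by (auto simp: eventually_at_filter)
  show "eventually (\<lambda>s::real. 2 * s \<noteq> 0) (at 0)"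
    by (auto simp: eventually_at_filter)
  show "eventually (\<lambda>s. DERIV (\<lambda>s. f (1+s) - d1 1 * s) s :> d1 (1+s) - d1 1) (at 0)"
    using ev
  proof (rule eventually_mono)
    fix s :: real assume "s \<in> ball 0 e"
    then have "1+s \<in> ball 1 e" by (auto simp: dist_real_def)
    then have "(f has_real_derivative d1 (1+s)) (at (1+s))" using D by auto
    then show "DERIV (\<lambda>s. f (1+s) - d1 1 * s) s :> d1 (1+s) - d1 1"
      by (auto intro!: derivative_eq_intros DERIV_chain2[where f=f])
  qed
  show "eventually (\<lambda>s::real. DERIV (\<lambda>s. s^2) s :> 2 * s) (at 0)"
    by (auto intro!: derivative_eq_intros always_eventually)
  have "(d1 has_real_derivative d2 1) (at 1)" using D assms(1) by auto
  then have "((\<lambda>h. (d1 (1 + h) - d1 1) / h) \<longlongrightarrow> d2 1) (at 0)"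
    by (simp add: DERIV_def)
  then have "((\<lambda>h. (d1 (1 + h) - d1 1) / h / 2) \<longlongrightarrow> d2 1 / 2) (at 0)"
    by (intro tendsto_intros) auto
  then show "((\<lambda>s. (d1 (1+s) - d1 1) / (2 * s)) \<longlongrightarrow> d2 1 / 2) (at 0)"
    by (simp add: field_simps)
qed



lemma pinsker_gen:
  fixes Q R :: "'a::finite \<Rightarrow> real" and H :: "real \<Rightarrow> real"
  assumes Qp: "\<forall>x. Q x > 0" and sQ: "sum Q UNIV = 1" and Rn: "\<forall>x. R x \<ge> 0" and sR: "sum R UNIV = 1"
    and a: "a > 0" and Hn: "\<forall>t\<ge>0. H t \<ge> 0"
    and Hb: "\<forall>t\<ge>0. H t * (1 - c*(t-1)) \<ge> a/2*(t-1)^2"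
  shows "a/2 * (\<Sum>x\<in>UNIV. \<bar>R x - Q x\<bar>)^2 \<le> (\<Sum>x\<in>UNIV. Q x * H (R x / Q x))"
proof -
  define d where "d x = R x - Q x" for x
  define B where "B x = Q x - c * d x" for x
  define S where "S = (\<Sum>x\<in>UNIV. \<bar>d x\<bar>)"
  have key: "B x > 0 \<and> a/2 * (d x)^2 / B x \<le> Q x * H (R x / Q x)" for x
  proof -
    have q: "Q x > 0" using Qp by auto
    let ?t = "R x / Q x"
    have t0: "?t \<ge> 0" using q Rn by auto
    have t1: "?t - 1 = d x / Q x" using q by (simp add: d_def field_simps)
    have bq: "1 - c*(?t-1) = B x / Q x" using q by (simp add: t1 B_def field_simps)
    have hb: "H ?t * (B x / Q x) \<ge> a/2 * (d x / Q x)^2" using Hb t0 bq t1 by metis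
    have hn: "H ?t \<ge> 0" using Hn t0 by auto
    have Bp: "B x > 0"
    proof (cases "d x = 0")
      case True then show ?thesis using q by (simp add: B_def)
    next
      case False
      then have "a/2 * (d x / Q x)^2 > 0" using a q by auto
      then have "H ?t * (B x / Q x) > 0" using hb by linarith
      then have "B x / Q x > 0" using hn by (meson mult_nonneg_nonpos not_le)
      then show ?thesis using q by (simp add: zero_less_divide_iff)
    qed
    have "a/2 * (d x)^2 / B x = (a/2 * (d x / Q x)^2) * (Q x)^2 / B x"
      using q by (simp add: field_simps)
    also have "\<dots> \<le> (H ?t * (B x / Q x)) * (Q x)^2 / B x"
      using hb Bp by (intro divide_right_mono mult_right_mono) auto
    also have "\<dots> = Q x * H ?t" using q Bp by (simp add: field_simps power2_eq_square)
    finally show ?thesis using Bp by simp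
  qed
  have sd: "sum d UNIV = 0" using sQ sR by (simp add: d_def sum_subtractf)
  have sB: "sum B UNIV = 1" using sQ sd by (simp add: B_def sum_subtractf sum_distrib_left[symmetric])
  have "0 \<le> (\<Sum>x\<in>UNIV. (\<bar>d x\<bar> - S * B x)^2 / B x)"
    using key by (auto intro!: sum_nonneg divide_nonneg_pos)
  also have "\<dots> = (\<Sum>x\<in>UNIV. (d x)^2 / B x - 2 * S * \<bar>d x\<bar> + S^2 * B x)"
  proof (intro sum.cong refl)
    fix x
    have "B x > 0" using key by auto
    then show "(\<bar>d x\<bar> - S * B x)^2 / B x = (d x)^2 / B x - 2 * S * \<bar>d x\<bar> + S^2 * B x"
      by (simp add: field_simps power2_eq_square)
  qed
  also have "\<dots> = (\<Sum>x\<in>UNIV. (d x)^2 / B x) - 2 * S * S + S^2 * sum B UNIV"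
    by (simp add: sum.distrib sum_subtractf sum_distrib_left[symmetric] S_def)
  also have "\<dots> = (\<Sum>x\<in>UNIV. (d x)^2 / B x) - S^2" using sB by (simp add: power2_eq_square)
  finally have "S^2 \<le> (\<Sum>x\<in>UNIV. (d x)^2 / B x)" by simp
  then have "a/2 * S^2 \<le> a/2 * (\<Sum>x\<in>UNIV. (d x)^2 / B x)" using a by simp
  also have "\<dots> = (\<Sum>x\<in>UNIV. a/2 * (d x)^2 / B x)" by (simp add: sum_distrib_left)
  also have "\<dots> \<le> (\<Sum>x\<in>UNIV. Q x * H (R x / Q x))" using key by (intro sum_mono) auto
  finally show ?thesis by (simp add: S_def d_def)
qed

lemma chi2_le_L1:
  fixes Q R :: "'a::finite \<Rightarrow> real"
  assumes Qp: "\<forall>x. Q x \<ge> m" and m: "m > 0" and s: "sum R UNIV = sum Q UNIV"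
  shows "chi2div R Q \<le> (\<Sum>x\<in>UNIV. \<bar>R x - Q x\<bar>)^2 / (2*m)"
proof -
  define d where "d x = R x - Q x" for x
  define S where "S = (\<Sum>x\<in>UNIV. \<bar>d x\<bar>)"
  have sd: "sum d UNIV = 0" using s by (simp add: d_def sum_subtractf)
  have dS: "2 * \<bar>d x\<bar> \<le> S" for x
  proof -
    have "S = \<bar>d x\<bar> + (\<Sum>y\<in>UNIV-{x}. \<bar>d y\<bar>)" unfolding S_def
      by (subst sum.remove[of UNIV x]) auto
    moreover have "sum d UNIV = d x + (\<Sum>y\<in>UNIV-{x}. d y)" by (subst sum.remove[of UNIV x]) auto
    moreover have "\<bar>\<Sum>y\<in>UNIV-{x}. d y\<bar> \<le> (\<Sum>y\<in>UNIV-{x}. \<bar>d y\<bar>)" by (rule sum_abs)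
    ultimately show ?thesis using sd by linarith
  qed
  have "chi2div R Q = (\<Sum>x\<in>UNIV. (d x)^2 / Q x)" by (simp add: chi2div_def d_def)
  also have "\<dots> \<le> (\<Sum>x\<in>UNIV. \<bar>d x\<bar> * (S/2) / m)"
  proof (intro sum_mono)
    fix x
    have "Q x \<ge> m" using Qp by auto
    then have "(d x)^2 / Q x \<le> (d x)^2 / m" using m by (intro divide_left_mono) auto
    also have "(d x)^2 / m = \<bar>d x\<bar> * \<bar>d x\<bar> / m" by (simp add: power2_eq_square)
    also have "\<bar>d x\<bar> * \<bar>d x\<bar> / m \<le> \<bar>d x\<bar> * (S/2) / m"
      using dS[of x] m by (intro divide_right_mono mult_left_mono) auto
    finally show "(d x)^2 / Q x \<le> \<bar>d x\<bar> * (S/2) / m" .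
  qed
  also have "\<dots> = S^2 / (2*m)" by (simp add: sum_divide_distrib[symmetric] sum_distrib_right[symmetric] S_def power2_eq_square)
  finally show ?thesis by (simp add: S_def d_def)
qed

lemma fdiv_shift:
  fixes Q R :: "'a::finite \<Rightarrow> real"
  assumes Qp: "\<forall>x. Q x > 0" and s: "sum R UNIV = sum Q UNIV"
  shows "fdiv f R Q = (\<Sum>x\<in>UNIV. Q x * (fext f (R x / Q x) - k * (R x / Q x - 1)))"
proof -
  have "(\<Sum>x\<in>UNIV. Q x * (fext f (R x / Q x) - k * (R x / Q x - 1)))
     = (\<Sum>x\<in>UNIV. Q x * fext f (R x / Q x) - k * (R x - Q x))"
  proof (intro sum.cong refl)
    fix x
    have "Q x > 0" using Qp by auto
    then show "Q x * (fext f (R x / Q x) - k * (R x / Q x - 1)) = Q x * fext f (R x / Q x) - k * (R x - Q x)"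
      by (simp add: field_simps)
  qed
  also have "\<dots> = (\<Sum>x\<in>UNIV. Q x * fext f (R x / Q x)) - k * (\<Sum>x\<in>UNIV. R x - Q x)"
    by (simp add: sum_subtractf sum_distrib_left[symmetric])
  also have "(\<Sum>x\<in>UNIV. R x - Q x) = 0" using s by (simp add: sum_subtractf)
  moreover have "fdiv f R Q = (\<Sum>x\<in>UNIV. Q x * fext f (R x / Q x))"
    unfolding fdiv_def using Qp by (intro sum.cong refl) (metis less_irrefl)
  ultimately show ?thesis by simp
qed

lemma fdiv_eps:
  fixes Q R :: "'a::finite \<Rightarrow> real"
  assumes Qp: "\<forall>x. Q x > 0" and Rn: "\<forall>x. R x \<ge> 0" and s: "sum R UNIV = sum Q UNIV"
    and eps: "0 < \<epsilon>" "\<epsilon> < 1"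
    and phi: "\<forall>s. 1 + s > 0 \<longrightarrow> f (1+s) = k * s + s^2 * \<phi> s"
  shows "fdiv f (\<lambda>x. Q x + \<epsilon> * (R x - Q x)) Q
       = \<epsilon>^2 * (\<Sum>x\<in>UNIV. Q x * ((R x - Q x)/Q x)^2 * \<phi> (\<epsilon> * ((R x - Q x)/Q x)))"
proof -
  have pos: "Q x + \<epsilon> * (R x - Q x) > 0" for x
  proof -
    have "Q x + \<epsilon> * (R x - Q x) = (1-\<epsilon>) * Q x + \<epsilon> * R x" by (simp add: algebra_simps)
    moreover have "(1-\<epsilon>) * Q x > 0" using Qp eps by auto
    moreover have "\<epsilon> * R x \<ge> 0" using Rn eps by auto
    ultimately show ?thesis by linarith
  qed
  have eq: "(Q x + \<epsilon> * (R x - Q x)) / Q x = 1 + \<epsilon> * ((R x - Q x)/Q x)" for x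
    using Qp[rule_format, of x] by (simp add: field_simps)
  have "fdiv f (\<lambda>x. Q x + \<epsilon> * (R x - Q x)) Q
      = (\<Sum>x\<in>UNIV. Q x * f (1 + \<epsilon> * ((R x - Q x)/Q x)))"
    unfolding fdiv_def
  proof (intro sum.cong refl)
    fix x
    have "(Q x + \<epsilon> * (R x - Q x)) / Q x > 0" using pos Qp by auto
    then show "(if Q x = 0 then 0 else Q x * fext f ((Q x + \<epsilon> * (R x - Q x)) / Q x)) =
          Q x * f (1 + \<epsilon> * ((R x - Q x) / Q x))"
      using Qp eq[of x] by (auto simp: fext_def)
  qed
  also have "\<dots> = (\<Sum>x\<in>UNIV. k * \<epsilon> * (R x - Q x) + \<epsilon>^2 * (Q x * ((R x - Q x)/Q x)^2 * \<phi> (\<epsilon> * ((R x - Q x)/Q x))))"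
  proof (intro sum.cong refl)
    fix x
    have "1 + \<epsilon> * ((R x - Q x)/Q x) > 0" using pos[of x] eq[of x] Qp by (metis divide_pos_pos)
    then have "f (1 + \<epsilon> * ((R x - Q x)/Q x)) = k * (\<epsilon> * ((R x - Q x)/Q x)) + (\<epsilon> * ((R x - Q x)/Q x))^2 * \<phi> (\<epsilon> * ((R x - Q x)/Q x))"
      using phi by blast
    then show "Q x * f (1 + \<epsilon> * ((R x - Q x) / Q x)) = k * \<epsilon> * (R x - Q x) + \<epsilon>^2 * (Q x * ((R x - Q x) / Q x)^2 * \<phi> (\<epsilon> * ((R x - Q x) / Q x)))"
      using Qp[rule_format, of x] by (simp add: field_simps power2_eq_square)
  qed
  also have "\<dots> = k * \<epsilon> * (\<Sum>x\<in>UNIV. R x - Q x) + \<epsilon>^2 * (\<Sum>x\<in>UNIV. Q x * ((R x - Q x)/Q x)^2 * \<phi> (\<epsilon> * ((R x - Q x)/Q x)))"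
    by (simp add: sum.distrib sum_distrib_left)
  also have "(\<Sum>x\<in>UNIV. R x - Q x) = 0" using s by (simp add: sum_subtractf)
  finally show ?thesis by simp
qed

lemma sum_phi_lim:
  fixes Q r :: "'a::finite \<Rightarrow> real"
  assumes "isCont \<phi> 0"
  shows "((\<lambda>\<epsilon>. \<Sum>x\<in>UNIV. Q x * (r x)^2 * \<phi> (\<epsilon> * r x)) \<longlongrightarrow> (\<Sum>x\<in>UNIV. Q x * (r x)^2 * \<phi> 0)) (at_right 0)"
proof (intro tendsto_sum tendsto_mult tendsto_const)
  fix x
  have "((\<lambda>\<epsilon>. \<epsilon> * r x) \<longlongrightarrow> 0 * r x) (at_right 0)"
    by (intro tendsto_intros tendsto_ident_at)
  then show "((\<lambda>\<epsilon>. \<phi> (\<epsilon> * r x)) \<longlongrightarrow> \<phi> 0) (at_right 0)"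
    using isCont_tendsto_compose[OF assms] by simp
qed



lemma f_facts:
  fixes f d1 d2 :: "real \<Rightarrow> real" and d3 e :: real
  assumes cvx: "convex_on {0<..} f"
    and "e > 0"
    and D: "\<forall>t\<in>ball 1 e. (f has_real_derivative d1 t) (at t) \<and> (d1 has_real_derivative d2 t) (at t)"
    and f1: "f 1 = 0" and a: "d2 1 > 0"
    and G: "\<forall>t>0. (f t - d1 1 * (t - 1)) * (1 - d3 / (3 * d2 1) * (t - 1)) \<ge> d2 1 / 2 * (t - 1)^2"
    and L: "\<exists>L. (f \<longlongrightarrow> L) (at_right 0)"
    and cc: "concave_on {0<..} (\<lambda>x. (f x - fzero f) / x)"
  shows "\<forall>t\<ge>0. fext f t - d1 1 * (t - 1) \<ge> 0"
    and "\<forall>t\<ge>0. (fext f t - d1 1 * (t - 1)) * (1 - d3 / (3 * d2 1) * (t - 1)) \<ge> d2 1 / 2 * (t - 1)^2"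
    and "\<forall>t\<ge>0. fext f t - d1 1 * (t - 1) \<le> (d1 1 + fzero f) * (t - 1)^2"
proof -
  have fz: "(f \<longlongrightarrow> fzero f) (at_right 0)"
    using L tendsto_Lim[OF trivial_limit_at_right_real] unfolding fzero_def by metis
  have ev: "eventually (\<lambda>t::real. t > 0) (at_right 0)" by (rule eventually_at_right_less)
  have d1: "(f has_real_derivative d1 1) (at 1)" using D \<open>e > 0\<close> by auto
  have tan: "f t - d1 1 * (t - 1) \<ge> 0" if "t > 0" for t
  proof -
    have "f t - f 1 \<ge> d1 1 * (t - 1)"
      by (rule convex_on_imp_above_tangent[OF cvx])
         (use that d1 in \<open>auto simp: interior_open intro: convex_connected has_field_derivative_at_within\<close>)
    then show ?thesis using f1 by simp
  qed
  have "((\<lambda>t. f t - d1 1 * (t - 1)) \<longlongrightarrow> fzero f - d1 1 * (0 - 1)) (at_right 0)"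
    by (intro tendsto_intros fz tendsto_ident_at)
  then have t0: "fzero f - d1 1 * (0 - 1) \<ge> 0"
    by (rule tendsto_lowerbound) (use ev tan in \<open>auto elim: eventually_mono\<close>)
  show "\<forall>t\<ge>0. fext f t - d1 1 * (t - 1) \<ge> 0"
    using tan t0 by (auto simp: fext_def)
  let ?c = "d3 / (3 * d2 1)"
  have "((\<lambda>t. (f t - d1 1 * (t - 1)) * (1 - ?c * (t - 1))) \<longlongrightarrow> (fzero f - d1 1 * (0 - 1)) * (1 - ?c * (0 - 1))) (at_right 0)"
    by (intro tendsto_intros fz tendsto_ident_at)
  moreover have "((\<lambda>t. d2 1 / 2 * (t - 1)^2) \<longlongrightarrow> d2 1 / 2 * (0 - 1)^2) (at_right 0)"
    by (intro tendsto_intros tendsto_ident_at)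
  ultimately have g0: "d2 1 / 2 * (0 - 1)^2 \<le> (fzero f - d1 1 * (0 - 1)) * (1 - ?c * (0 - 1))"
    by (rule tendsto_le[OF trivial_limit_at_right_real]) (use ev G in \<open>auto elim: eventually_mono\<close>)
  show "\<forall>t\<ge>0. (fext f t - d1 1 * (t - 1)) * (1 - ?c * (t - 1)) \<ge> d2 1 / 2 * (t - 1)^2"
    using G g0 by (auto simp: fext_def)
  define g where "g x = (f x - fzero f) / x" for x
  have "convex_on {0<..} (\<lambda>x. - g x)" using cc by (simp add: concave_on_def g_def)
  have gd: "(g has_real_derivative (d1 1 + fzero f)) (at 1)"
  proof -
    have "((\<lambda>x. (f x - fzero f) / x) has_real_derivative ((d1 1 - 0) * 1 - (f 1 - fzero f) * 1) / (1 * 1)) (at 1)"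
      by (intro derivative_eq_intros d1) (auto simp: d1)
    then show ?thesis using f1 by (simp add: g_def[abs_def])
  qed
  have up: "f t - d1 1 * (t - 1) \<le> (d1 1 + fzero f) * (t - 1)^2" if "t > 0" for t
  proof -
    have "(- g t) - (- g 1) \<ge> (- (d1 1 + fzero f)) * (t - 1)"
      by (rule convex_on_imp_above_tangent[OF \<open>convex_on {0<..} (\<lambda>x. - g x)\<close>])
         (use that has_field_derivative_at_within[OF DERIV_minus[OF gd]] in \<open>auto simp: interior_open intro: convex_connected\<close>)
    then have "g t \<le> - fzero f + (d1 1 + fzero f) * (t - 1)" using f1 by (simp add: g_def algebra_simps)
    then have "(f t - fzero f) / t \<le> - fzero f + (d1 1 + fzero f) * (t - 1)" by (simp add: g_def)
    then have "f t - fzero f \<le> t * (- fzero f + (d1 1 + fzero f) * (t - 1))"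
      using that by (simp add: divide_le_eq mult.commute)
    then show ?thesis by (simp add: algebra_simps power2_eq_square)
  qed
  show "\<forall>t\<ge>0. fext f t - d1 1 * (t - 1) \<le> (d1 1 + fzero f) * (t - 1)^2"
    using up by (auto simp: fext_def)
qed



theorem theorem4:
  fixes P :: "'x::finite \<Rightarrow> 'y::finite \<Rightarrow> real"
    and f d1 d2 :: "real \<Rightarrow> real" and d3 e :: real
  assumes "CARD('x) \<ge> 2" and "CARD('y) \<ge> 2"
    and "\<forall>x y. 0 \<le> P x y" and "(\<Sum>x\<in>UNIV. \<Sum>y\<in>UNIV. P x y) = 1"
    and "\<forall>x. marg_X P x > 0" and "\<forall>y. marg_Y P y > 0"
    and "convex_on {0<..} f"
    and "strictly_convex_at_1 f"
    and "e > 0"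
    and "\<forall>t\<in>ball 1 e. (f has_real_derivative d1 t) (at t) \<and> (d1 has_real_derivative d2 t) (at t)"
    and "(d2 has_real_derivative d3) (at 1)"
    and "f 1 = 0" and "d2 1 > 0"
    and "\<forall>t>0. (f t - d1 1 * (t - 1)) * (1 - d3 / (3 * d2 1) * (t - 1)) \<ge> d2 1 / 2 * (t - 1)^2"
    and "\<exists>L. (f \<longlongrightarrow> L) (at_right 0)"
    and "concave_on {0<..} (\<lambda>x. (f x - fzero f) / x)"
  shows "eta_chi2 (marg_X P) (channel P) \<le> eta_f f (marg_X P) (channel P)
       \<and> eta_f f (marg_X P) (channel P)
           \<le> ereal ((d1 1 + fzero f) / (d2 1 * Min (range (marg_X P)))) * eta_chi2 (marg_X P) (channel P)"
proof -
  define PX where "PX = marg_X P"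
  define PY where "PY = marg_Y P"
  define W where "W = channel P"
  define a where "a = d2 1"
  define K where "K = d1 1 + fzero f"
  define m where "m = Min (range PX)"
  define h where "h t = fext f t - d1 1 * (t - 1)" for t
  have a: "a > 0" using assms by (simp add: a_def)
  have PXp: "\<forall>x. PX x > 0" using assms by (simp add: PX_def)
  have PYp: "\<forall>y. PY y > 0" using assms by (simp add: PY_def)
  have sPX: "sum PX UNIV = 1" using assms by (simp add: PX_def marg_X_def)
  have m: "m > 0" "\<forall>x. m \<le> PX x"
  proof -
    have "m \<in> range PX" unfolding m_def by (intro Min_in) auto
    then show "m > 0" using PXp by auto
    show "\<forall>x. m \<le> PX x" unfolding m_def by (auto intro: Min_le)
  qed
  have WPX: "chmap W PX = PY"
  proof
    fix y
    have "chmap W PX y = (\<Sum>x\<in>UNIV. P x y / PX x * PX x)"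
      by (simp add: chmap_def W_def channel_def PX_def)
    also have "\<dots> = (\<Sum>x\<in>UNIV. P x y)"
    proof (intro sum.cong refl)
      fix x have "PX x > 0" using PXp by auto
      then show "P x y / PX x * PX x = P x y" by simp
    qed
    finally show "chmap W PX y = PY y" by (simp add: PY_def marg_Y_def)
  qed
  have sPY: "sum PY UNIV = 1"
  proof -
    have "sum PY UNIV = (\<Sum>y\<in>UNIV. \<Sum>x\<in>UNIV. P x y)" by (simp add: PY_def marg_Y_def)
    also have "\<dots> = (\<Sum>x\<in>UNIV. \<Sum>y\<in>UNIV. P x y)" by (rule sum.swap)
    finally show ?thesis using assms(4) by simp
  qed
  have Wn: "chmap W R y \<ge> 0" if "\<forall>x. R x \<ge> 0" for R y
    using that PXp assms(3) unfolding chmap_def W_def channel_def PX_def[symmetric]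
    by (intro sum_nonneg mult_nonneg_nonneg divide_nonneg_pos) auto
  have Ws: "sum (chmap W R) UNIV = sum R UNIV" for R
  proof -
    have "sum (chmap W R) UNIV = (\<Sum>x\<in>UNIV. (\<Sum>y\<in>UNIV. P x y) / PX x * R x)"
      unfolding chmap_def W_def channel_def PX_def[symmetric]
      by (subst sum.swap) (simp add: sum_distrib_right sum_divide_distrib)
    also have "\<dots> = sum R UNIV"
    proof (intro sum.cong refl)
      fix x have "PX x > 0" using PXp by auto
      then show "(\<Sum>y\<in>UNIV. P x y) / PX x * R x = R x" by (simp add: PX_def marg_X_def)
    qed
    finally show ?thesis .
  qed
  have Wlin: "chmap W (\<lambda>x. Q x + \<epsilon> * (R x - Q x)) = (\<lambda>y. chmap W Q y + \<epsilon> * (chmap W R y - chmap W Q y))" for Q R \<epsilon>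
    by (auto simp: chmap_def algebra_simps sum.distrib sum_subtractf sum_distrib_left)
  note ff = f_facts[OF assms(7) assms(9) assms(10) assms(12) assms(13) assms(14) assms(15) assms(16)]
  have K0: "K \<ge> 0" using ff(1)[rule_format, of 0] by (simp add: K_def fext_def)
  have fd_up: "fdiv f R Q \<le> K * chi2div R Q"
    if Qp: "\<forall>x. Q x > 0" and Rn: "\<forall>x. R x \<ge> 0" and s: "sum R UNIV = sum Q UNIV"
    for Q R :: "'b::finite \<Rightarrow> real"
  proof -
    have "fdiv f R Q = (\<Sum>x\<in>UNIV. Q x * h (R x / Q x))"
      using fdiv_shift[OF Qp s, of f "d1 1"] by (simp add: h_def)
    also have "\<dots> \<le> (\<Sum>x\<in>UNIV. Q x * (K * (R x / Q x - 1)^2))"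
    proof (intro sum_mono mult_left_mono)
      fix x
      have "R x / Q x \<ge> 0" using Qp Rn by (meson divide_nonneg_pos)
      then show "h (R x / Q x) \<le> K * (R x / Q x - 1)^2" using ff(3) by (simp add: h_def K_def)
      show "0 \<le> Q x" using Qp by (simp add: less_imp_le)
    qed
    also have "\<dots> = K * chi2div R Q" unfolding chi2div_def sum_distrib_left
    proof (intro sum.cong refl)
      fix x
      have "Q x > 0" using Qp by auto
      then show "Q x * (K * (R x / Q x - 1)^2) = K * ((R x - Q x)^2 / Q x)"
        by (simp add: field_simps power2_eq_square)
    qed
    finally show ?thesis .
  qed
  have fd_lo: "a * m * chi2div R PX \<le> fdiv f R PX"
    if Rn: "\<forall>x. R x \<ge> 0" and s: "sum R UNIV = 1" for R
  proof -
    have "chi2div R PX \<le> (\<Sum>x\<in>UNIV. \<bar>R x - PX x\<bar>)^2 / (2*m)"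
      using chi2_le_L1[OF m(2) m(1)] s sPX by simp
    then have "a * m * chi2div R PX \<le> a * m * ((\<Sum>x\<in>UNIV. \<bar>R x - PX x\<bar>)^2 / (2*m))"
      using a m by (intro mult_left_mono) auto
    also have "\<dots> = a/2 * (\<Sum>x\<in>UNIV. \<bar>R x - PX x\<bar>)^2" using m by (simp add: field_simps)
    also have "\<dots> \<le> (\<Sum>x\<in>UNIV. PX x * h (R x / PX x))"
      using pinsker_gen[OF PXp sPX Rn s a, of h "d3 / (3 * d2 1)"] ff(1,2) by (simp add: h_def a_def)
    also have "\<dots> = fdiv f R PX"
      using fdiv_shift[OF PXp, of R f "d1 1"] s sPX by (simp add: h_def)
    finally show ?thesis .
  qed
  show ?thesis
  proof
    show "eta_chi2 (marg_X P) (channel P) \<le> eta_f f (marg_X P) (channel P)"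
      unfolding PX_def[symmetric] W_def[symmetric]
      unfolding eta_chi2_def contraction_def WPX
    proof (rule SUP_least)
      fix R assume "R \<in> {R. is_pmf R \<and> 0 < chi2div R PX}"
      then have Rn: "\<forall>x. R x \<ge> 0" and sR: "sum R UNIV = 1" and ci: "0 < chi2div R PX"
        by (auto simp: is_pmf_def)
      define \<phi> where "\<phi> s = (if s = 0 then a/2 else (f (1+s) - d1 1 * s) / s^2)" for s
      have phic: "isCont \<phi> 0"
      proof -
        have l: "((\<lambda>s. (f (1+s) - d1 1 * s) / s^2) \<longlongrightarrow> a/2) (at 0)"
          using phi_lim[OF assms(9,10,12)] by (simp add: a_def)
        have "eventually (\<lambda>s. (f (1+s) - d1 1 * s) / s^2 = \<phi> s) (at (0::real))"
          by (simp add: \<phi>_def eventually_at_filter)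
        then have "(\<phi> \<longlongrightarrow> a/2) (at 0)" by (rule Lim_transform_eventually[OF l])
        then show ?thesis by (simp add: isCont_def \<phi>_def)
      qed
      have phid: "\<forall>s. 1 + s > 0 \<longrightarrow> f (1+s) = d1 1 * s + s^2 * \<phi> s"
        using assms(12) by (auto simp: \<phi>_def)
      define WR where "WR = chmap W R"
      have WRn: "\<forall>y. WR y \<ge> 0" using Wn[OF Rn] by (simp add: WR_def)
      have sWR: "sum WR UNIV = 1" using Ws sR by (simp add: WR_def)
      define A where "A \<epsilon> = (\<Sum>y\<in>UNIV. PY y * ((WR y - PY y)/PY y)^2 * \<phi> (\<epsilon> * ((WR y - PY y)/PY y)))" for \<epsilon>
      define B where "B \<epsilon> = (\<Sum>x\<in>UNIV. PX x * ((R x - PX x)/PX x)^2 * \<phi> (\<epsilon> * ((R x - PX x)/PX x)))" for \<epsilon>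
      have cf: "(\<Sum>x\<in>UNIV. Q x * ((S x - Q x)/Q x)^2 * \<phi> 0) = a/2 * chi2div S Q"
        if Qp: "\<forall>x. Q x > 0" for Q S :: "'b::finite \<Rightarrow> real"
        unfolding chi2div_def sum_distrib_left
      proof (intro sum.cong refl)
        fix x have "Q x > 0" using Qp by auto
        then show "Q x * ((S x - Q x)/Q x)^2 * \<phi> 0 = a/2 * ((S x - Q x)^2 / Q x)"
          by (simp add: \<phi>_def field_simps power2_eq_square)
      qed
      have Alim: "(A \<longlongrightarrow> a/2 * chi2div WR PY) (at_right 0)"
        using sum_phi_lim[OF phic, of PY "\<lambda>y. (WR y - PY y)/PY y"] cf[OF PYp, of WR]
        unfolding A_def[abs_def] by simp
      have Blim: "(B \<longlongrightarrow> a/2 * chi2div R PX) (at_right 0)"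
        using sum_phi_lim[OF phic, of PX "\<lambda>x. (R x - PX x)/PX x"] cf[OF PXp, of R]
        unfolding B_def[abs_def] by simp
      have "((\<lambda>\<epsilon>. A \<epsilon> / B \<epsilon>) \<longlongrightarrow> (a/2 * chi2div WR PY) / (a/2 * chi2div R PX)) (at_right 0)"
        using Alim Blim a ci by (intro tendsto_divide) auto
      then have rlim: "((\<lambda>\<epsilon>. A \<epsilon> / B \<epsilon>) \<longlongrightarrow> chi2div WR PY / chi2div R PX) (at_right 0)"
        using a by simp
      have evB: "eventually (\<lambda>\<epsilon>. B \<epsilon> > 0) (at_right 0)"
        using order_tendstoD(1)[OF Blim] a ci by simp
      have ev1: "eventually (\<lambda>\<epsilon>::real. \<epsilon> < 1) (at_right 0)"
        using order_tendstoD(2)[OF tendsto_ident_at[of "0::real" "{0<..}"], of 1] by simp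
      have evle: "eventually (\<lambda>\<epsilon>. ereal (A \<epsilon> / B \<epsilon>) \<le> eta_f f PX W) (at_right 0)"
        using evB ev1 eventually_at_right_less[of "0::real"]
      proof (eventually_elim)
        case (elim \<epsilon>)
        then have e0: "0 < \<epsilon>" and e1: "\<epsilon> < 1" and Bp: "B \<epsilon> > 0" by auto
        define Re where "Re x = PX x + \<epsilon> * (R x - PX x)" for x
        have fin: "fdiv f Re PX = \<epsilon>^2 * B \<epsilon>"
          unfolding Re_def B_def using fdiv_eps[OF PXp Rn _ e0 e1 phid] sR sPX by simp
        have WRe: "chmap W Re = (\<lambda>y. PY y + \<epsilon> * (WR y - PY y))"
          unfolding Re_def Wlin WPX WR_def ..
        have fout: "fdiv f (chmap W Re) PY = \<epsilon>^2 * A \<epsilon>"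
          unfolding WRe A_def using fdiv_eps[OF PYp WRn _ e0 e1 phid] sWR sPY by simp
        have Ren: "Re x \<ge> 0" for x
        proof -
          have "Re x = (1 - \<epsilon>) * PX x + \<epsilon> * R x" by (simp add: Re_def algebra_simps)
          moreover have "(1 - \<epsilon>) * PX x \<ge> 0" using e1 PXp by (simp add: less_imp_le)
          moreover have "\<epsilon> * R x \<ge> 0" using e0 Rn by simp
          ultimately show ?thesis by linarith
        qed
        have sRe: "sum Re UNIV = 1"
          using sR sPX by (simp add: Re_def sum.distrib sum_subtractf sum_distrib_left[symmetric])
        have pos: "0 < fdiv f Re PX" using fin e0 Bp by simp
        have "ereal (fdiv f (chmap W Re) (chmap W PX) / fdiv f Re PX) \<le> eta_f f PX W"
          unfolding eta_f_def contraction_def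
          by (rule SUP_upper) (use Ren sRe pos in \<open>auto simp: is_pmf_def\<close>)
        moreover have "fdiv f (chmap W Re) (chmap W PX) / fdiv f Re PX = A \<epsilon> / B \<epsilon>"
          using fin fout WPX e0 by simp
        ultimately show ?case by simp
      qed
      have "ereal (chi2div WR PY / chi2div R PX) \<le> eta_f f PX W"
        by (rule tendsto_le[OF _ tendsto_const tendsto_ereal[OF rlim] evle]) simp
      then show "ereal (chi2div (chmap W R) PY / chi2div R PX) \<le> eta_f f PX W"
        by (simp add: WR_def)
    qed
  next
    show "eta_f f (marg_X P) (channel P)
           \<le> ereal ((d1 1 + fzero f) / (d2 1 * Min (range (marg_X P)))) * eta_chi2 (marg_X P) (channel P)"
      unfolding PX_def[symmetric] W_def[symmetric] m_def[symmetric] K_def[symmetric] a_def[symmetric]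
      unfolding eta_f_def contraction_def
    proof (rule SUP_least)
      fix R assume "R \<in> {R. is_pmf R \<and> 0 < fdiv f R PX}"
      then have Rn: "\<forall>x. R x \<ge> 0" and sR: "sum R UNIV = 1" and Dp: "0 < fdiv f R PX"
        by (auto simp: is_pmf_def)
      have ci: "chi2div R PX > 0"
      proof -
        have "fdiv f R PX \<le> K * chi2div R PX" using fd_up[OF PXp Rn] sR sPX by simp
        moreover have "chi2div R PX \<ge> 0" unfolding chi2div_def using PXp by (intro sum_nonneg divide_nonneg_pos) auto
        ultimately show ?thesis using Dp K0 by (smt (verit) mult_nonneg_nonpos)
      qed
      have le_eta: "ereal (chi2div (chmap W R) PY / chi2div R PX) \<le> eta_chi2 PX W"
        unfolding eta_chi2_def contraction_def WPX
        by (rule SUP_upper) (use Rn sR ci in \<open>auto simp: is_pmf_def\<close>)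
      have co: "chi2div (chmap W R) PY \<ge> 0" unfolding chi2div_def using PYp by (intro sum_nonneg divide_nonneg_pos) auto
      have fo: "fdiv f (chmap W R) PY \<le> K * chi2div (chmap W R) PY"
        using fd_up[OF PYp] Wn[OF Rn] Ws sR sPY by simp
      have fi: "a * m * chi2div R PX \<le> fdiv f R PX" using fd_lo[OF Rn sR] .
      have "fdiv f (chmap W R) PY / fdiv f R PX \<le> K * chi2div (chmap W R) PY / fdiv f R PX"
        using fo Dp by (intro divide_right_mono) auto
      also have "\<dots> \<le> K * chi2div (chmap W R) PY / (a * m * chi2div R PX)"
        using fi a m ci K0 co Dp by (intro divide_left_mono) (auto intro!: mult_pos_pos)
      also have "\<dots> = K / (a * m) * (chi2div (chmap W R) PY / chi2div R PX)" by simp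
      finally have "ereal (fdiv f (chmap W R) (chmap W PX) / fdiv f R PX) \<le> ereal (K / (a * m)) * ereal (chi2div (chmap W R) PY / chi2div R PX)"
        using WPX by simp
      also have "\<dots> \<le> ereal (K / (a * m)) * eta_chi2 PX W"
        using le_eta K0 a m by (intro ereal_mult_left_mono) auto
      finally show "ereal (fdiv f (chmap W R) (chmap W PX) / fdiv f R PX) \<le> ereal (K / (a * m)) * eta_chi2 PX W" .
    qed
  qed
qed

end
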